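(* Let $n\ge m\ge0$, $d\ge1$, and let $t_2,\dots,t_n,s_1,\dots,s_m$ be integers. Let $\tilde\omega$ be the class of $\prod_{i=2}^nx_i^{t_i}\prod_{j=1}^my_j^{s_j}\,\frac{dx_2}{x_2}\wedge\cdots\wedge\frac{dx_n}{x_n}\wedge\frac{dy_1}{y_1}\wedge\cdots\wedge\frac{dy_m}{y_m}$ in $\mathcal{H}^{n+m-1}_{\mathrm{dR}}(U/S,f)$. Then for every $2\le i\le n$ and $1\le j\le m$, $$(D-t_i/d)\,\tilde\omega=x_i^d\cdot\tilde\omega\qquad\text{and}\qquad (D+s_j/d)\,\tilde\omega=y_j^d\cdot\tilde\omega,$$ where $x_i^d\cdot\tilde\omega$ (resp. $y_j^d\cdot\tilde\omega$) is the class of the form multiplied by $x_i^d$ (resp. $y_j^d$).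
   Context: Varieties over $\mathbb{C}$. $S=\mathbb{G}_m\setminus\{1\}$ if $n=m$, $S=\mathbb{G}_m$ if $n>m$, coordinate $z$. $U=S\times\mathbb{G}_m^{n+m-1}$ with coordinates $(z,x_2,\dots,x_n,y_1,\dots,y_m)$, $f=\sum_{i=2}^nx_i^d-\sum_jy_j^d+z\prod_jy_j^d/\prod_{i\ge2}x_i^d$. $\mathcal{H}^{n+m-1}_{\mathrm{dR}}(U/S,f)$ is the $(n+m-1)$-st cohomology of the relative twisted de Rham complex $(\Omega^\bullet_{U/S},d+df)$, and $D=\nabla_{z\partial_z}$ is the Gauss–Manin connection, $\nabla_{z\partial_z}[g\eta]=[(z\partial_zg+z\partial_z(f)\,g)\eta]$. *)

theory Defs
  imports "HOL-Analysis.Analysis"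
begin

text \<open>Points of the ambient space: (z, x, y) with x i (2 \<le> i \<le> n) and y j (1 \<le> j \<le> m)
  the fibre coordinates. Other components of x, y are irrelevant dummies.\<close>
type_synonym pt = "complex \<times> (nat \<Rightarrow> complex) \<times> (nat \<Rightarrow> complex)"

definition zc :: "pt \<Rightarrow> complex" where "zc p = fst p"
definition xc :: "pt \<Rightarrow> nat \<Rightarrow> complex" where "xc p = fst (snd p)"
definition yc :: "pt \<Rightarrow> nat \<Rightarrow> complex" where "yc p = snd (snd p)"

definition Sbase :: "nat \<Rightarrow> nat \<Rightarrow> complex set" where
  "Sbase n m = {z. z \<noteq> 0 \<and> (n = m \<longrightarrow> z \<noteq> 1)}"

definition Udom :: "nat \<Rightarrow> nat \<Rightarrow> pt set" where
  "Udom n m = {p. zc p \<in> Sbase n m \<and> (\<forall>i\<in>{2..n}. xc p i \<noteq> 0) \<and> (\<forall>j\<in>{1..m}. yc p j \<noteq> 0)}"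

inductive_set regU :: "nat \<Rightarrow> nat \<Rightarrow> (pt \<Rightarrow> complex) set" for n m where
  const: "(\<lambda>p. c) \<in> regU n m"
| zcoord: "zc \<in> regU n m"
| zinv: "(\<lambda>p. inverse (zc p)) \<in> regU n m"
| zm1inv: "n = m \<Longrightarrow> (\<lambda>p. inverse (zc p - 1)) \<in> regU n m"
| xcoord: "i \<in> {2..n} \<Longrightarrow> (\<lambda>p. xc p i) \<in> regU n m"
| xinv: "i \<in> {2..n} \<Longrightarrow> (\<lambda>p. inverse (xc p i)) \<in> regU n m"
| ycoord: "j \<in> {1..m} \<Longrightarrow> (\<lambda>p. yc p j) \<in> regU n m"
| yinv: "j \<in> {1..m} \<Longrightarrow> (\<lambda>p. inverse (yc p j)) \<in> regU n m"
| add: "g \<in> regU n m \<Longrightarrow> h \<in> regU n m \<Longrightarrow> (\<lambda>p. g p + h p) \<in> regU n m"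
| mult: "g \<in> regU n m \<Longrightarrow> h \<in> regU n m \<Longrightarrow> (\<lambda>p. g p * h p) \<in> regU n m"

definition fpot :: "nat \<Rightarrow> nat \<Rightarrow> nat \<Rightarrow> pt \<Rightarrow> complex" where
  "fpot n m d p = (\<Sum>i=2..n. xc p i ^ d) - (\<Sum>j=1..m. yc p j ^ d)
      + zc p * (\<Prod>j=1..m. yc p j ^ d) / (\<Prod>i=2..n. xc p i ^ d)"

definition theta_z :: "(pt \<Rightarrow> complex) \<Rightarrow> pt \<Rightarrow> complex" where
  "theta_z g p = zc p * deriv (\<lambda>w. g (w, xc p, yc p)) (zc p)"
definition theta_x :: "nat \<Rightarrow> (pt \<Rightarrow> complex) \<Rightarrow> pt \<Rightarrow> complex" where
  "theta_x i g p = xc p i * deriv (\<lambda>w. g (zc p, (xc p)(i := w), yc p)) (xc p i)"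
definition theta_y :: "nat \<Rightarrow> (pt \<Rightarrow> complex) \<Rightarrow> pt \<Rightarrow> complex" where
  "theta_y j g p = yc p j * deriv (\<lambda>w. g (zc p, xc p, (yc p)(j := w))) (yc p j)"

text \<open>Top-degree relative forms are g \<cdot> omega0 with omega0 = dx_2/x_2 \<and> ... \<and> dy_m/y_m and
  g \<in> O(U) (free rank one module). Forms of degree n+m-2 are \<Sum>_k h_k \<cdot> (omega0 with the k-th
  factor omitted), and (d + df) maps this to (\<Sum>_k \<plusminus>(theta_k h_k + theta_k(f) h_k)) \<cdot> omega0.
  Hence g \<cdot> omega0 and g' \<cdot> omega0 have the same class in H^{n+m-1}_dR(U/S,f) iff the following holds
  (the signs can be absorbed into the h_k).\<close>
definition same_class :: "nat \<Rightarrow> nat \<Rightarrow> nat \<Rightarrow> (pt \<Rightarrow> complex) \<Rightarrow> (pt \<Rightarrow> complex) \<Rightarrow> bool" where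
  "same_class n m d g g' \<longleftrightarrow>
     (\<exists>hx hy. (\<forall>i\<in>{2..n}. hx i \<in> regU n m) \<and> (\<forall>j\<in>{1..m}. hy j \<in> regU n m) \<and>
        (\<forall>p\<in>Udom n m. g p - g' p =
            (\<Sum>i=2..n. theta_x i (hx i) p + theta_x i (fpot n m d) p * hx i p)
          + (\<Sum>j=1..m. theta_y j (hy j) p + theta_y j (fpot n m d) p * hy j p)))"

text \<open>Gauss--Manin connection D = nabla_{z d/dz} on representatives:
  D[g omega0] = [(z d_z g + z d_z(f) g) omega0].\<close>
definition GM :: "nat \<Rightarrow> nat \<Rightarrow> nat \<Rightarrow> (pt \<Rightarrow> complex) \<Rightarrow> pt \<Rightarrow> complex" where
  "GM n m d g p = theta_z g p + theta_z (fpot n m d) p * g p"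

definition monom :: "nat \<Rightarrow> nat \<Rightarrow> (nat \<Rightarrow> int) \<Rightarrow> (nat \<Rightarrow> int) \<Rightarrow> pt \<Rightarrow> complex" where
  "monom n m t s p = (\<Prod>i=2..n. xc p i powi t i) * (\<Prod>j=1..m. yc p j powi s j)"

end

theory Submission
  imports Defs
begin

lemma pt_eta: "(zc p, xc p, yc p) = p" by (simp add: zc_def xc_def yc_def)

lemma monom_x:
  assumes "i \<in> {2..n}"
  shows "monom n m t s (z, X(i := w), Y) = w powi t i * ((\<Prod>k\<in>{2..n}-{i}. X k powi t k) * (\<Prod>j=1..m. Y j powi s j))"
proof -
  have "(\<Prod>k=2..n. (X(i := w)) k powi t k) = w powi t i * (\<Prod>k\<in>{2..n}-{i}. (X(i := w)) k powi t k)"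
    using assms by (simp add: prod.remove)
  also have "(\<Prod>k\<in>{2..n}-{i}. (X(i := w)) k powi t k) = (\<Prod>k\<in>{2..n}-{i}. X k powi t k)"
    by (rule prod.cong) auto
  finally show ?thesis by (simp add: monom_def xc_def yc_def)
qed

lemma monom_y:
  assumes "j \<in> {1..m}"
  shows "monom n m t s (z, X, Y(j := w)) = w powi s j * ((\<Prod>k=2..n. X k powi t k) * (\<Prod>l\<in>{1..m}-{j}. Y l powi s l))"
proof -
  have "(\<Prod>l=1..m. (Y(j := w)) l powi s l) = w powi s j * (\<Prod>l\<in>{1..m}-{j}. (Y(j := w)) l powi s l)"
    using assms by (simp add: prod.remove)
  also have "(\<Prod>l\<in>{1..m}-{j}. (Y(j := w)) l powi s l) = (\<Prod>l\<in>{1..m}-{j}. Y l powi s l)"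
    by (rule prod.cong) auto
  finally show ?thesis by (simp add: monom_def xc_def yc_def)
qed

lemma theta_x_cmonom:
  assumes "i \<in> {2..n}" "xc p i \<noteq> 0"
  shows "theta_x i (\<lambda>q. c * monom n m t s q) p = c * of_int (t i) * monom n m t s p"
proof -
  define R where "R = (\<Prod>k\<in>{2..n}-{i}. xc p k powi t k) * (\<Prod>j=1..m. yc p j powi s j)"
  have e: "(\<lambda>w. c * monom n m t s (zc p, (xc p)(i := w), yc p)) = (\<lambda>w. c * (w powi t i * R))"
    using monom_x[OF assms(1)] R_def by simp
  have "((\<lambda>w. c * (w powi t i * R)) has_field_derivative c * (of_int (t i) * xc p i powi (t i - 1) * 1 * R)) (at (xc p i))"
    using assms by (auto intro!: derivative_eq_intros)
  hence "deriv (\<lambda>w. c * (w powi t i * R)) (xc p i) = c * (of_int (t i) * xc p i powi (t i - 1) * 1 * R)"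
    by (rule DERIV_imp_deriv)
  moreover have "monom n m t s p = xc p i powi t i * R"
    using monom_x[OF assms(1), where t=t and s=s and m=m and z="zc p" and X="xc p" and w="xc p i" and Y="yc p"] R_def by (simp add: pt_eta)
  ultimately show ?thesis unfolding theta_x_def e
    using power_int_minus_mult[of "xc p i" "t i"] assms(2) by (simp add: algebra_simps)
qed

lemma theta_y_cmonom:
  assumes "j \<in> {1..m}" "yc p j \<noteq> 0"
  shows "theta_y j (\<lambda>q. c * monom n m t s q) p = c * of_int (s j) * monom n m t s p"
proof -
  define R where "R = (\<Prod>k=2..n. xc p k powi t k) * (\<Prod>l\<in>{1..m}-{j}. yc p l powi s l)"
  have e: "(\<lambda>w. c * monom n m t s (zc p, xc p, (yc p)(j := w))) = (\<lambda>w. c * (w powi s j * R))"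
    using monom_y[OF assms(1)] R_def by simp
  have "((\<lambda>w. c * (w powi s j * R)) has_field_derivative c * (of_int (s j) * yc p j powi (s j - 1) * 1 * R)) (at (yc p j))"
    using assms by (auto intro!: derivative_eq_intros)
  hence "deriv (\<lambda>w. c * (w powi s j * R)) (yc p j) = c * (of_int (s j) * yc p j powi (s j - 1) * 1 * R)"
    by (rule DERIV_imp_deriv)
  moreover have "monom n m t s p = yc p j powi s j * R"
    using monom_y[OF assms(1), where t=t and s=s and n=n and z="zc p" and X="xc p" and w="yc p j" and Y="yc p"] R_def by (simp add: pt_eta)
  ultimately show ?thesis unfolding theta_y_def e
    using power_int_minus_mult[of "yc p j" "s j"] assms(2) by (simp add: algebra_simps)
qed

lemma theta_x_fpot:
  assumes "i \<in> {2..n}" "\<forall>k\<in>{2..n}. xc p k \<noteq> 0" "1 \<le> d"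
  shows "theta_x i (fpot n m d) p = of_nat d * xc p i ^ d
     - of_nat d * (zc p * (\<Prod>j=1..m. yc p j ^ d) / (\<Prod>k=2..n. xc p k ^ d))"
proof -
  define A where "A = (\<Sum>k\<in>{2..n}-{i}. xc p k ^ d) - (\<Sum>j=1..m. yc p j ^ d)"
  define C where "C = (\<Prod>k\<in>{2..n}-{i}. xc p k ^ d)"
  define K where "K = zc p * (\<Prod>j=1..m. yc p j ^ d) / C"
  have C0: "C \<noteq> 0" unfolding C_def using assms(2) by (simp add: prod_zero_iff)
  have w0: "xc p i \<noteq> 0" using assms by auto
  have PX: "(\<Prod>k=2..n. xc p k ^ d) = xc p i ^ d * C"
    unfolding C_def using assms(1) by (simp add: prod.remove)
  have e: "fpot n m d (zc p, (xc p)(i := w), yc p) = w ^ d + A + K * w powi (- int d)" if "w \<noteq> 0" for w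
  proof -
    have s1: "(\<Sum>k=2..n. ((xc p)(i := w)) k ^ d) = w ^ d + (\<Sum>k\<in>{2..n}-{i}. xc p k ^ d)"
    proof -
      have "(\<Sum>k=2..n. ((xc p)(i := w)) k ^ d) = w ^ d + (\<Sum>k\<in>{2..n}-{i}. ((xc p)(i := w)) k ^ d)"
        using assms(1) by (simp add: sum.remove)
      also have "(\<Sum>k\<in>{2..n}-{i}. ((xc p)(i := w)) k ^ d) = (\<Sum>k\<in>{2..n}-{i}. xc p k ^ d)"
        by (rule sum.cong) auto
      finally show ?thesis .
    qed
    have p1: "(\<Prod>k=2..n. ((xc p)(i := w)) k ^ d) = w ^ d * C"
    proof -
      have "(\<Prod>k=2..n. ((xc p)(i := w)) k ^ d) = w ^ d * (\<Prod>k\<in>{2..n}-{i}. ((xc p)(i := w)) k ^ d)"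
        using assms(1) by (simp add: prod.remove)
      also have "(\<Prod>k\<in>{2..n}-{i}. ((xc p)(i := w)) k ^ d) = C"
        unfolding C_def by (rule prod.cong) auto
      finally show ?thesis .
    qed
    show ?thesis unfolding fpot_def using s1 p1 that C0
      by (simp add: xc_def yc_def zc_def A_def K_def power_int_minus field_simps)
  qed
  have ev: "eventually (\<lambda>w. fpot n m d (zc p, (xc p)(i := w), yc p) = w ^ d + A + K * w powi (- int d)) (nhds (xc p i))"
  proof -
    have "eventually (\<lambda>w. w \<in> -{0}) (nhds (xc p i))"
      using w0 by (intro eventually_nhds_in_open) auto
    thus ?thesis by (rule eventually_mono) (use e in auto)
  qed
  have "((\<lambda>w. w ^ d + A + K * w powi (- int d)) has_field_derivative
      of_nat d * (1 * xc p i ^ (d - Suc 0)) + 0 + K * (of_int (- int d) * xc p i powi (- int d - 1) * 1)) (at (xc p i))"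
  proof -
    have p: "((\<lambda>w. w powi (- int d)) has_field_derivative of_int (- int d) * xc p i powi (- int d - 1) * 1) (at (xc p i))"
      by (rule DERIV_power_int[OF DERIV_ident]) (use w0 in auto)
    have q: "((\<lambda>w. w ^ d) has_field_derivative of_nat d * (1 * xc p i ^ (d - Suc 0))) (at (xc p i))"
      by (rule DERIV_power[OF DERIV_ident])
    show ?thesis
      by (rule DERIV_add[OF DERIV_add[OF q DERIV_const] DERIV_cmult[OF p]])
  qed
  hence "deriv (\<lambda>w. w ^ d + A + K * w powi (- int d)) (xc p i) =
      of_nat d * (1 * xc p i ^ (d - Suc 0)) + 0 + K * (of_int (- int d) * xc p i powi (- int d - 1) * 1)"
    by (rule DERIV_imp_deriv)
  hence dv: "deriv (\<lambda>w. fpot n m d (zc p, (xc p)(i := w), yc p)) (xc p i) =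
      of_nat d * (1 * xc p i ^ (d - Suc 0)) + 0 + K * (of_int (- int d) * xc p i powi (- int d - 1) * 1)"
    by (simp only: deriv_cong_ev[OF ev refl])
  obtain d' where d': "d = Suc d'" using assms(3) by (cases d) auto
  have eq1: "xc p i * (of_nat d * (1 * xc p i ^ (d - Suc 0)) + 0 + K * (of_int (- int d) * xc p i powi (- int d - 1) * 1))
     = of_nat d * xc p i ^ d - of_nat d * (K * xc p i powi (- int d))"
  proof -
    have a: "xc p i * xc p i ^ (d - Suc 0) = xc p i ^ d" using d' by simp
    have b: "xc p i * xc p i powi (- int d - 1) = xc p i powi (- int d)"
      using power_int_minus_mult[of "xc p i" "- int d"] w0 by (simp add: mult.commute)
    have "xc p i * (of_nat d * (1 * xc p i ^ (d - Suc 0)) + 0 + K * (of_int (- int d) * xc p i powi (- int d - 1) * 1))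
     = of_nat d * (xc p i * xc p i ^ (d - Suc 0)) - of_nat d * (K * (xc p i * xc p i powi (- int d - 1)))"
      by (simp add: algebra_simps)
    then show ?thesis by (simp only: a b)
  qed
  have eq2: "K * xc p i powi (- int d) = zc p * (\<Prod>j=1..m. yc p j ^ d) / (xc p i ^ d * C)"
    unfolding K_def power_int_minus power_int_of_nat by (simp add: divide_inverse mult_ac)
  show ?thesis unfolding theta_x_def PX by (simp only: dv eq1 eq2)
qed

lemma theta_y_fpot:
  assumes "j \<in> {1..m}" "1 \<le> d"
  shows "theta_y j (fpot n m d) p = - (of_nat d * yc p j ^ d)
     + of_nat d * (zc p * (\<Prod>l=1..m. yc p l ^ d) / (\<Prod>k=2..n. xc p k ^ d))"
proof -
  define B where "B = (\<Sum>k=2..n. xc p k ^ d) - (\<Sum>l\<in>{1..m}-{j}. yc p l ^ d)"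
  define E where "E = (\<Prod>l\<in>{1..m}-{j}. yc p l ^ d)"
  define K where "K = zc p * E / (\<Prod>k=2..n. xc p k ^ d)"
  have PY: "(\<Prod>l=1..m. yc p l ^ d) = yc p j ^ d * E"
    unfolding E_def using assms(1) by (simp add: prod.remove)
  have e: "(\<lambda>w. fpot n m d (zc p, xc p, (yc p)(j := w))) = (\<lambda>w. B - w ^ d + K * w ^ d)"
  proof
    fix w
    have s1: "(\<Sum>l=1..m. ((yc p)(j := w)) l ^ d) = w ^ d + (\<Sum>l\<in>{1..m}-{j}. yc p l ^ d)"
    proof -
      have "(\<Sum>l=1..m. ((yc p)(j := w)) l ^ d) = w ^ d + (\<Sum>l\<in>{1..m}-{j}. ((yc p)(j := w)) l ^ d)"
        using assms(1) by (simp add: sum.remove)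
      also have "(\<Sum>l\<in>{1..m}-{j}. ((yc p)(j := w)) l ^ d) = (\<Sum>l\<in>{1..m}-{j}. yc p l ^ d)"
        by (rule sum.cong) auto
      finally show ?thesis .
    qed
    have p1: "(\<Prod>l=1..m. ((yc p)(j := w)) l ^ d) = w ^ d * E"
    proof -
      have "(\<Prod>l=1..m. ((yc p)(j := w)) l ^ d) = w ^ d * (\<Prod>l\<in>{1..m}-{j}. ((yc p)(j := w)) l ^ d)"
        using assms(1) by (simp add: prod.remove)
      also have "(\<Prod>l\<in>{1..m}-{j}. ((yc p)(j := w)) l ^ d) = E"
        unfolding E_def by (rule prod.cong) auto
      finally show ?thesis .
    qed
    show "fpot n m d (zc p, xc p, (yc p)(j := w)) = B - w ^ d + K * w ^ d"
      unfolding fpot_def using s1 p1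
      by (simp add: xc_def yc_def zc_def B_def K_def algebra_simps)
  qed
  have q: "((\<lambda>w. w ^ d) has_field_derivative of_nat d * (1 * yc p j ^ (d - Suc 0))) (at (yc p j))"
    by (rule DERIV_power[OF DERIV_ident])
  have "((\<lambda>w. B - w ^ d + K * w ^ d) has_field_derivative
      0 - of_nat d * (1 * yc p j ^ (d - Suc 0)) + K * (of_nat d * (1 * yc p j ^ (d - Suc 0)))) (at (yc p j))"
    by (rule DERIV_add[OF DERIV_diff[OF DERIV_const q] DERIV_cmult[OF q]])
  hence dv: "deriv (\<lambda>w. fpot n m d (zc p, xc p, (yc p)(j := w))) (yc p j) =
      0 - of_nat d * (1 * yc p j ^ (d - Suc 0)) + K * (of_nat d * (1 * yc p j ^ (d - Suc 0)))"
    unfolding e by (rule DERIV_imp_deriv)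
  obtain d' where d': "d = Suc d'" using assms(2) by (cases d) auto
  have a: "yc p j * yc p j ^ (d - Suc 0) = yc p j ^ d" using d' by simp
  have eq1: "yc p j * (0 - of_nat d * (1 * yc p j ^ (d - Suc 0)) + K * (of_nat d * (1 * yc p j ^ (d - Suc 0))))
     = - (of_nat d * (yc p j * yc p j ^ (d - Suc 0))) + of_nat d * (K * (yc p j * yc p j ^ (d - Suc 0)))"
    by (simp add: algebra_simps)
  have eq2: "K * yc p j ^ d = zc p * (yc p j ^ d * E) / (\<Prod>k=2..n. xc p k ^ d)"
    unfolding K_def by simp
  show ?thesis unfolding theta_y_def PY by (simp only: dv eq1 a eq2)
qed

lemma theta_z_monom: "theta_z (monom n m t s) p = 0"
  unfolding theta_z_def monom_def xc_def yc_def by simp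

lemma theta_z_fpot: "theta_z (fpot n m d) p = zc p * (\<Prod>j=1..m. yc p j ^ d) / (\<Prod>k=2..n. xc p k ^ d)"
proof -
  define P where "P = (\<Prod>j=1..m. yc p j ^ d) / (\<Prod>k=2..n. xc p k ^ d)"
  define A where "A = (\<Sum>i=2..n. xc p i ^ d) - (\<Sum>j=1..m. yc p j ^ d)"
  have e: "(\<lambda>w. fpot n m d (w, xc p, yc p)) = (\<lambda>w. A + w * P)"
    unfolding fpot_def A_def P_def by (simp add: xc_def yc_def zc_def)
  have "((\<lambda>w. A + w * P) has_field_derivative 0 + 1 * P) (at (zc p))"
    by (rule DERIV_add[OF DERIV_const DERIV_cmult_right[OF DERIV_ident]]) 
  hence "deriv (\<lambda>w. A + w * P) (zc p) = P" by (simp add: DERIV_imp_deriv)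
  thus ?thesis unfolding theta_z_def e P_def by simp
qed

lemma theta_x_zero: "theta_x i (\<lambda>q. 0) p = 0" unfolding theta_x_def by simp
lemma theta_y_zero: "theta_y i (\<lambda>q. 0) p = 0" unfolding theta_y_def by simp

lemma regU_prod: "finite A \<Longrightarrow> (\<forall>a\<in>A. g a \<in> regU n m) \<Longrightarrow> (\<lambda>p. \<Prod>a\<in>A. g a p) \<in> regU n m"
proof (induction A rule: finite_induct)
  case empty then show ?case using regU.const[of 1] by simp
next
  case (insert a A) then show ?case using regU.mult[of "g a" n m "\<lambda>p. \<Prod>a\<in>A. g a p"] by simp
qed

lemma regU_pow: "g \<in> regU n m \<Longrightarrow> (\<lambda>p. g p ^ k) \<in> regU n m"
  by (induction k) (auto intro: regU.intros)

lemma regU_powi: "g \<in> regU n m \<Longrightarrow> (\<lambda>p. inverse (g p)) \<in> regU n m \<Longrightarrow> (\<lambda>p. g p powi k) \<in> regU n m"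
  unfolding power_int_def by (cases "0 \<le> k") (auto intro: regU_pow)

lemma monom_reg: "monom n m t s \<in> regU n m"
proof -
  have "(\<lambda>p. \<Prod>i=2..n. xc p i powi t i) \<in> regU n m"
    by (rule regU_prod) (auto intro: regU_powi regU.intros)
  moreover have "(\<lambda>p. \<Prod>j=1..m. yc p j powi s j) \<in> regU n m"
    by (rule regU_prod) (auto intro!: regU_powi regU.ycoord regU.yinv)
  ultimately have "(\<lambda>p. (\<Prod>i=2..n. xc p i powi t i) * (\<Prod>j=1..m. yc p j powi s j)) \<in> regU n m"
    by (rule regU.mult)
  thus ?thesis unfolding monom_def[abs_def] .
qed

lemma cmonom_reg: "(\<lambda>p. c * monom n m t s p) \<in> regU n m"
  by (rule regU.mult[OF regU.const monom_reg])

theorem lemma2p15: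
  fixes n m d :: nat and t s :: "nat \<Rightarrow> int"
  assumes "m \<le> n" and "1 \<le> d"
  shows "(\<forall>i\<in>{2..n}. same_class n m d
            (\<lambda>p. GM n m d (monom n m t s) p - (of_int (t i) / of_nat d) * monom n m t s p)
            (\<lambda>p. xc p i ^ d * monom n m t s p))
       \<and> (\<forall>j\<in>{1..m}. same_class n m d
            (\<lambda>p. GM n m d (monom n m t s) p + (of_int (s j) / of_nat d) * monom n m t s p)
            (\<lambda>p. yc p j ^ d * monom n m t s p))"
proof (intro conjI ballI)
  have d0: "(of_nat d :: complex) \<noteq> 0" using assms(2) by simp
  fix i assume i: "i \<in> {2..n}"
  define c where "c = - (1 / (of_nat d :: complex))"
  define hx where "hx = (\<lambda>k. if k = i then (\<lambda>q. c * monom n m t s q) else (\<lambda>q. 0::complex))"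
  define hy where "hy = (\<lambda>l::nat. (\<lambda>q::pt. 0::complex))"
  show "same_class n m d
            (\<lambda>p. GM n m d (monom n m t s) p - (of_int (t i) / of_nat d) * monom n m t s p)
            (\<lambda>p. xc p i ^ d * monom n m t s p)"
    unfolding same_class_def
  proof (rule exI[where x=hx], rule exI[where x=hy], intro conjI ballI)
    show "hx k \<in> regU n m" if "k \<in> {2..n}" for k unfolding hx_def by (auto intro: cmonom_reg regU.const)
    show "hy k \<in> regU n m" if "k \<in> {1..m}" for k unfolding hy_def by (rule regU.const)
    fix p assume p: "p \<in> Udom n m"
    have xs: "\<forall>k\<in>{2..n}. xc p k \<noteq> 0" using p by (simp add: Udom_def)
    define Q where "Q = zc p * (\<Prod>j=1..m. yc p j ^ d) / (\<Prod>k=2..n. xc p k ^ d)"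
    define M where "M = monom n m t s p"
    have s2: "(\<Sum>j=1..m. theta_y j (hy j) p + theta_y j (fpot n m d) p * hy j p) = 0"
      unfolding hy_def by (simp add: theta_y_zero)
    have s1: "(\<Sum>k=2..n. theta_x k (hx k) p + theta_x k (fpot n m d) p * hx k p)
       = theta_x i (hx i) p + theta_x i (fpot n m d) p * hx i p"
    proof -
      have "(\<Sum>k=2..n. theta_x k (hx k) p + theta_x k (fpot n m d) p * hx k p)
        = (theta_x i (hx i) p + theta_x i (fpot n m d) p * hx i p)
          + (\<Sum>k\<in>{2..n}-{i}. theta_x k (hx k) p + theta_x k (fpot n m d) p * hx k p)"
        using i by (simp add: sum.remove)
      also have "(\<Sum>k\<in>{2..n}-{i}. theta_x k (hx k) p + theta_x k (fpot n m d) p * hx k p) = 0"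
        by (rule sum.neutral) (simp add: hx_def theta_x_zero)
      finally show ?thesis by simp
    qed
    have t1: "theta_x i (hx i) p = c * of_int (t i) * M"
      unfolding hx_def M_def using theta_x_cmonom[OF i] xs i by simp
    have t2: "theta_x i (fpot n m d) p = of_nat d * xc p i ^ d - of_nat d * Q"
      unfolding Q_def using theta_x_fpot[OF i xs assms(2)] .
    have gm: "GM n m d (monom n m t s) p = Q * M"
      unfolding GM_def theta_z_monom theta_z_fpot Q_def M_def by simp
    show "GM n m d (monom n m t s) p - of_int (t i) / of_nat d * monom n m t s p - xc p i ^ d * monom n m t s p =
          (\<Sum>k=2..n. theta_x k (hx k) p + theta_x k (fpot n m d) p * hx k p) +
          (\<Sum>j=1..m. theta_y j (hy j) p + theta_y j (fpot n m d) p * hy j p)"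
      unfolding s1 s2 t1 t2 gm M_def[symmetric]
      using d0 by (simp add: hx_def c_def M_def field_simps)
  qed
next
  have d0: "(of_nat d :: complex) \<noteq> 0" using assms(2) by simp
  fix j assume j: "j \<in> {1..m}"
  define c where "c = 1 / (of_nat d :: complex)"
  define hy where "hy = (\<lambda>k. if k = j then (\<lambda>q. c * monom n m t s q) else (\<lambda>q. 0::complex))"
  define hx where "hx = (\<lambda>l::nat. (\<lambda>q::pt. 0::complex))"
  show "same_class n m d
            (\<lambda>p. GM n m d (monom n m t s) p + (of_int (s j) / of_nat d) * monom n m t s p)
            (\<lambda>p. yc p j ^ d * monom n m t s p)"
    unfolding same_class_def
  proof (rule exI[where x=hx], rule exI[where x=hy], intro conjI ballI)
    show "hy k \<in> regU n m" if "k \<in> {1..m}" for k unfolding hy_def by (auto intro: cmonom_reg regU.const)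
    show "hx k \<in> regU n m" if "k \<in> {2..n}" for k unfolding hx_def by (rule regU.const)
    fix p assume p: "p \<in> Udom n m"
    have ys: "yc p j \<noteq> 0" using p j by (simp add: Udom_def)
    define Q where "Q = zc p * (\<Prod>j=1..m. yc p j ^ d) / (\<Prod>k=2..n. xc p k ^ d)"
    define M where "M = monom n m t s p"
    have s1: "(\<Sum>k=2..n. theta_x k (hx k) p + theta_x k (fpot n m d) p * hx k p) = 0"
      unfolding hx_def by (simp add: theta_x_zero)
    have s2: "(\<Sum>k=1..m. theta_y k (hy k) p + theta_y k (fpot n m d) p * hy k p)
       = theta_y j (hy j) p + theta_y j (fpot n m d) p * hy j p"
    proof -
      have "(\<Sum>k=1..m. theta_y k (hy k) p + theta_y k (fpot n m d) p * hy k p)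
        = (theta_y j (hy j) p + theta_y j (fpot n m d) p * hy j p)
          + (\<Sum>k\<in>{1..m}-{j}. theta_y k (hy k) p + theta_y k (fpot n m d) p * hy k p)"
        using j by (simp add: sum.remove)
      also have "(\<Sum>k\<in>{1..m}-{j}. theta_y k (hy k) p + theta_y k (fpot n m d) p * hy k p) = 0"
        by (rule sum.neutral) (simp add: hy_def theta_y_zero)
      finally show ?thesis by simp
    qed
    have t1: "theta_y j (hy j) p = c * of_int (s j) * M"
      unfolding hy_def M_def using theta_y_cmonom[OF j ys] by simp
    have t2: "theta_y j (fpot n m d) p = - (of_nat d * yc p j ^ d) + of_nat d * Q"
      unfolding Q_def using theta_y_fpot[OF j assms(2)] .
    have gm: "GM n m d (monom n m t s) p = Q * M"
      unfolding GM_def theta_z_monom theta_z_fpot Q_def M_def by simp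
    show "GM n m d (monom n m t s) p + of_int (s j) / of_nat d * monom n m t s p - yc p j ^ d * monom n m t s p =
          (\<Sum>k=2..n. theta_x k (hx k) p + theta_x k (fpot n m d) p * hx k p) +
          (\<Sum>j=1..m. theta_y j (hy j) p + theta_y j (fpot n m d) p * hy j p)"
      unfolding s1 s2 t1 t2 gm M_def[symmetric]
      using d0 by (simp add: hy_def c_def M_def field_simps)
  qed
qed

end
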